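(* Let $h>0$, $\rho>0$, and $\lambda_1=\delta_1e^{\mathrm{i}\theta_1/2}$ with $\delta_1>0$, $\theta_1\in(0,\pi)$, and $\mu_\pm(\lambda_1)\neq0$, where $$\mu_+(\lambda)=\Big(\frac{2\mathrm{i}}{h\lambda}-\lambda\Big)\frac{1+\frac{\mathrm{i}h\rho^2}{2}}{1-\frac{\mathrm{i}h\rho^2}{2}},\qquad \mu_-(\lambda)=\frac{2\mathrm{i}}{h\lambda}+\lambda .$$ Let $e^{\mathrm{i}\Xi_{1,n}(t)}:=\left(\frac{\mu_+(\lambda_1)/\mu_-(\lambda_1)}{|\mu_+(\lambda_1)/\mu_-(\lambda_1)|}\right)^{n}\exp\!\Big(\mathrm{i}t\,\mathrm{Im}\Big[\frac{\mathrm{i}}{2}\Big(\frac{1}{\rho^2}-\rho^2\Big)-\frac{\mathrm{i}}{2}\Big(\lambda_1^2-\frac{1}{\lambda_1^2}\Big)\Big]\Big)$. Then $e^{\mathrm{i}\Xi_{1,n}(t)}=1$ for all $n\in\mathbb{Z}$, $t\in\mathbb{R}$ (equivalently: $\mu_+(\lambda_1)/\mu_-(\lambda_1)$ is a positive real number and $\rho^{-2}-\rho^2=(\delta_1^2-\delta_1^{-2})\cos\theta_1$) if and only if one of the following holds: (a) either ($\rho<1$ and $h>2/\rho^4$) or ($\rho>1$ and $0<h<2/\rho^4$), and $$\delta_1=\frac{1}{\rho}\sqrt{\frac{2}{h}},\qquad \cos\theta_1=\frac{2h(1-\rho^4)}{4-h^2\rho^4};$$ (b) $\rho=1$, $h=2$,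 $\delta_1=1$, and $\theta_1\in(\pi/2,\pi)$ (i.e. $\arg\lambda_1\in(\pi/4,\pi/2)$).
   Context: This condition characterizes when the one-breather solution on the nonzero constant background $(U,R,Q)=(\rho,\rho,\rho^{-1})$ of the semi-discrete MTM system has no periodic oscillations; $\mu_\pm$ are the multipliers of the two fundamental solutions $(\rho,-\lambda)^T\mu_+^n e^{\frac{\mathrm{i}}{2}(\rho^{-2}-\rho^2)t}$ and $(\lambda,\rho)^T\mu_-^n e^{\frac{\mathrm{i}}{2}(\lambda^2-\lambda^{-2})t}$ of the Lax pair at that background, and $\Xi_{1,n}$ is the imaginary part of the phase difference between them. *)

theory Defs
  imports Complex_Main
begin

text \<open>Multipliers of the two fundamental solutions of the Lax pair of the
semi-discrete MTM system at the constant background (rho, rho, 1/rho),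
with lattice step h.\<close>

definition mu_plus :: "real \<Rightarrow> real \<Rightarrow> complex \<Rightarrow> complex" where
  "mu_plus h \<rho> lam =
     (2 * \<i> / (of_real h * lam) - lam) *
     ((1 + \<i> * of_real h * of_real (\<rho>^2) / 2) / (1 - \<i> * of_real h * of_real (\<rho>^2) / 2))"

definition mu_minus :: "real \<Rightarrow> complex \<Rightarrow> complex" where
  "mu_minus h lam = 2 * \<i> / (of_real h * lam) + lam"

definition expiXi :: "real \<Rightarrow> real \<Rightarrow> complex \<Rightarrow> int \<Rightarrow> real \<Rightarrow> complex" where
  "expiXi h \<rho> lam n t =
     (let q = mu_plus h \<rho> lam / mu_minus h lam in
       (q / of_real (cmod q)) powi n *
       exp (\<i> * of_real (t * Im (\<i> / 2 * of_real (1 / \<rho>^2 - \<rho>^2)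
                                 - \<i> / 2 * (lam^2 - 1 / lam^2)))))"

end

theory Submission imports Defs begin
lemma core_fwd:
  fixes h p u g :: real
  assumes hp: "h>0" "p>0" "u>0" "-1<g" "g<1"
    and I1: "4*p - h^2*p*u^2 + u*g*(4-h^2*p^2) = 0"
    and R1: "(4-h^2*u^2)*(4-h^2*p^2) - 16*h^2*p*u*g > 0"
    and E1: "u - p^2*u = (u^2-1)*g*p"
  shows "((p<1 \<and> h > 2/p^2 \<or> p>1 \<and> h < 2/p^2) \<and> u = 2/(h*p) \<and> g = 2*h*(1-p^2)/(4-h^2*p^2))
         \<or> (p=1 \<and> h=2 \<and> u=1 \<and> g<0)"
proof -
  have "(h*p*u - 2)*(h*p*u+2)*(u-p)*(u+p) = 0"
  proof -
    have "(h*p*u - 2)*(h*p*u+2)*(u-p)*(u+p) = -(p*(u^2-1))*(4*p - h^2*p*u^2 + u*g*(4-h^2*p^2))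
        + u*(4-h^2*p^2)*(g*p*(u^2-1) - u*(1-p^2))" by (simp add: algebra_simps power2_eq_square)
    also have "\<dots> = 0" using I1 E1 by (simp add: algebra_simps)
    finally show ?thesis .
  qed
  moreover have "h*p*u+2 \<noteq> 0" "u+p \<noteq> 0" using hp by (auto simp: add_pos_pos) (smt (verit) mult_pos_pos)
  ultimately have "h*p*u = 2 \<or> u = p" by auto
  then show ?thesis
  proof
    assume u: "u = p"
    have "p*(1-p^2)*(1+g) = (u - p^2*u) - (u^2-1)*g*p" using u by (simp add: algebra_simps power2_eq_square)
    hence "p*(1-p^2)*(1+g) = 0" using E1 by simp
    hence "p^2 = 1" using hp by auto
    hence p1: "p = 1" using hp by (simp add: power2_eq_1_iff)
    have "(4-h^2)*(1+g) = 4*p - h^2*p*u^2 + u*g*(4-h^2*p^2)" using u p1 by (simp add: algebra_simps)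
    hence "(4-h^2)*(1+g) = 0" using I1 by simp
    hence "h^2 = 4" using hp by auto
    hence "(h-2)*(h+2) = 0" by (simp add: algebra_simps power2_eq_square)
    hence h2: "h = 2" using hp by auto
    have "g < 0" using R1 u p1 h2 by simp
    thus ?thesis using u p1 h2 by simp
  next
    assume hu: "h*p*u = 2"
    have u2: "u = 2/(h*p)" using hu hp by (simp add: field_simps)
    show ?thesis
    proof (cases "p = 1")
      case True
      have hu1: "h*u = 2" using hu True by simp
      have "(h*u)^2 = 4" using hu1 by simp
      hence hu4: "h^2*u^2 = 4" by (simp add: power_mult_distrib)
      have "u*g*(4-h^2) = (4*p - h^2*p*u^2 + u*g*(4-h^2*p^2)) - (4 - h^2*u^2)" using True by simp
      hence "u*g*(4-h^2) = 0" using I1 hu4 by simp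
      hence "g = 0 \<or> h^2 = 4" using hp by auto
      moreover have "g \<noteq> 0"
      proof
        assume "g = 0"
        show False using hu4 using R1 \<open>g=0\<close> by simp
      qed
      ultimately have "h^2 = 4" by auto
      hence "(h-2)*(h+2) = 0" by (simp add: algebra_simps power2_eq_square)
    hence h2: "h = 2" using hp by auto
      hence u1: "u = 1" using hu True by simp
      have "g < 0" using R1 u1 True h2 by simp
      thus ?thesis using u1 True h2 by simp
    next
      case False
      have hpu4: "h^2*p^2*u^2 = 4"
      proof -
        have "(h*p*u)^2 = 4" using hu by simp
        thus ?thesis by (simp add: power_mult_distrib)
      qed
      define T where "T = 4 - h^2*p^2"
      have gT: "g*T = 2*h*(1-p^2)"
      proof -
        have "h^2*p*(u - p^2*u) = h^2*p*((u^2-1)*g*p)" using E1 by simp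
        hence "h*(1-p^2)*(h*p*u) = g*(h^2*p^2*u^2 - h^2*p^2)" by (simp add: algebra_simps power2_eq_square)
        moreover have "h^2*p^2*u^2 = 4" using hu proof -
          have "(h*p*u)^2 = 4" using hu by simp
          thus ?thesis by (simp add: power_mult_distrib)
        qed
        ultimately show ?thesis using hu unfolding T_def by (simp add: algebra_simps)
      qed
      have p2: "1-p^2 \<noteq> 0" using False hp by (simp add: power2_eq_1_iff)
      hence T0: "T \<noteq> 0" using gT hp by auto
      have gdef: "g = 2*h*(1-p^2)/(4-h^2*p^2)" using gT T0 unfolding T_def by (simp add: field_simps)
      have hu2: "h^2*u^2 = 4/p^2" using hpu4 hp by (simp add: field_simps)
      have "(4-h^2*u^2)*(4-h^2*p^2) - 16*h^2*p*u*g = (4 - h^2*u^2)*T - 16*h*(h*p*u)*g"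
        unfolding T_def by (simp add: algebra_simps power2_eq_square)
      also have "\<dots> = (4-4/p^2)*T - 32*h*g" using hu hu2 by simp
      finally have R2: "(4-4/p^2)*T - 32*h*g > 0" using R1 by simp
      have "((4-4/p^2)*T - 32*h*g)*T = (4-4/p^2)*T^2 - 32*h*(g*T)" by (simp add: algebra_simps power2_eq_square)
      also have "\<dots> = (4-4/p^2)*T^2 - 64*h^2*(1-p^2)" using gT by (simp add: power2_eq_square)
      also have "\<dots> = (p^2-1)*(4*T^2/p^2 + 64*h^2)" using hp by (simp add: field_simps power2_eq_square)
      finally have "((4-4/p^2)*T - 32*h*g)*T = (p^2-1)*(4*T^2/p^2 + 64*h^2)" .
      hence eqT: "((4-4/p^2)*T - 32*h*g)*T^2 = ((p^2-1)*T)*(4*T^2/p^2 + 64*h^2)"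
      proof -
        assume E: "((4-4/p^2)*T - 32*h*g)*T = (p^2-1)*(4*T^2/p^2 + 64*h^2)"
        have "((4-4/p^2)*T - 32*h*g)*T^2 = (((4-4/p^2)*T - 32*h*g)*T)*T" by (simp only: power2_eq_square mult.assoc)
        also have "\<dots> = ((p^2-1)*(4*T^2/p^2 + 64*h^2))*T" by (simp only: E)
        also have "\<dots> = ((p^2-1)*T)*(4*T^2/p^2 + 64*h^2)" by (simp only: mult_ac)
        finally show ?thesis .
      qed
      have Qpos: "4*T^2/p^2 + 64*h^2 > 0" using hp by (simp add: add_nonneg_pos)
      have "((4-4/p^2)*T - 32*h*g)*T^2 > 0" using R2 T0 by simp
      hence "((p^2-1)*T)*(4*T^2/p^2 + 64*h^2) > 0" using eqT by simp
      hence sgn: "(p^2-1)*T > 0" using Qpos zero_less_mult_iff by (smt (verit))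
      have key: "2*h*(1-p^2) + T = -((h*p^2-2)*(h+2))" unfolding T_def by (simp add: algebra_simps power2_eq_square)
      have hc: "p<1 \<and> h > 2/p^2 \<or> p>1 \<and> h < 2/p^2"
      proof (cases "p > 1")
        case True
        hence "p^2 > 1" by (simp add: one_less_power)
        hence Tp: "T > 0" using sgn by (simp add: zero_less_mult_iff)
        have "g*T > (-1)*T" using Tp hp(4) by (intro mult_strict_right_mono) auto
        hence "(h*p^2-2)*(h+2) < 0" using gT key by simp
        hence "h*p^2 < 2" using hp by (simp add: mult_less_0_iff)
        hence "h < 2/p^2" using hp by (simp add: field_simps)
        thus ?thesis using True by simp
      next
        case False
        hence pl: "p < 1" using \<open>p \<noteq> 1\<close> by simp
        hence "p^2 < 1" using hp by (simp add: power_less_one_iff)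
        hence Tn: "T < 0" using sgn by (simp add: zero_less_mult_iff)
        have "g*T < (-1)*T" using Tn hp(4) by (intro mult_strict_right_mono_neg) auto
        hence "(h*p^2-2)*(h+2) > 0" using gT key by simp
        hence "h*p^2 > 2" using hp by (simp add: zero_less_mult_iff)
        hence "h > 2/p^2" using hp by (simp add: field_simps)
        thus ?thesis using pl by simp
      qed
      show ?thesis using hc u2 gdef by simp
    qed
  qed
qed

lemma core_bwd:
  fixes h p u g :: real
  assumes hp: "h>0" "p>0" "u>0"
    and H: "((p<1 \<and> h > 2/p^2 \<or> p>1 \<and> h < 2/p^2) \<and> u = 2/(h*p) \<and> g = 2*h*(1-p^2)/(4-h^2*p^2))
         \<or> (p=1 \<and> h=2 \<and> u=1 \<and> g<0)"
  shows "4*p - h^2*p*u^2 + u*g*(4-h^2*p^2) = 0 \<and> (4-h^2*u^2)*(4-h^2*p^2) - 16*h^2*p*u*g > 0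
    \<and> u - p^2*u = (u^2-1)*g*p"
  using H
proof
  assume "p=1 \<and> h=2 \<and> u=1 \<and> g<0"
  thus ?thesis by simp
next
  assume A: "(p<1 \<and> h > 2/p^2 \<or> p>1 \<and> h < 2/p^2) \<and> u = 2/(h*p) \<and> g = 2*h*(1-p^2)/(4-h^2*p^2)"
  define T where "T = 4 - h^2*p^2"
  have hu: "h*p*u = 2" using A hp by simp
  have hpu4: "h^2*p^2*u^2 = 4"
  proof -
    have "(h*p*u)^2 = 4" using hu by simp
    thus ?thesis by (simp add: power_mult_distrib)
  qed
  have sgn: "(p^2-1)*T > 0"
  proof (cases "p > 1")
    case True
    hence "h*p^2 < 2" using A hp by (simp add: field_simps)
    moreover have "h*p < h*p^2" using True hp by (simp add: power2_eq_square)
    ultimately have "h*p < 2" by simp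
    hence "(h*p)^2 < 2^2" using hp by (intro power_strict_mono) auto
    hence "T > 0" unfolding T_def by (simp add: power_mult_distrib)
    moreover have "p^2 > 1" using True by (simp add: one_less_power)
    ultimately show ?thesis by simp
  next
    case False
    hence pl: "p < 1" using A by auto
    hence "h*p^2 > 2" using A hp by (simp add: field_simps)
    moreover have "h*p > h*p^2" using pl hp by (simp add: power2_eq_square)
    ultimately have "h*p > 2" by simp
    hence "(h*p)^2 > 2^2" using hp by (intro power_strict_mono) auto
    hence "T < 0" unfolding T_def by (simp add: power_mult_distrib)
    moreover have "p^2 < 1" using pl hp by (simp add: power_less_one_iff)
    ultimately show ?thesis by (simp add: mult_neg_neg)
  qed
  hence T0: "T \<noteq> 0" by auto
  have gT: "g*T = 2*h*(1-p^2)" using A T0 unfolding T_def by simp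
  have I: "4*p - h^2*p*u^2 + u*g*(4-h^2*p^2) = 0"
  proof -
    have "p*(4*p - h^2*p*u^2 + u*g*(4-h^2*p^2)) = 4*p^2 - (h*p*u)^2 + (p*u)*(g*T)"
      unfolding T_def by (simp add: algebra_simps power2_eq_square)
    also have "\<dots> = 4*p^2 - (h*p*u)^2 + (h*p*u)*2*(1-p^2)" by (simp only: gT) (simp add: algebra_simps)
    also have "\<dots> = 0" using hu by simp
    finally show ?thesis using hp by simp
  qed
  have E: "u - p^2*u = (u^2-1)*g*p"
  proof -
    have "h^2*p*(u - p^2*u) = h*(h*p*u)*(1-p^2)" by (simp add: algebra_simps power2_eq_square)
    also have "\<dots> = g*T" using hu gT by simp
    also have "\<dots> = g*(h^2*p^2*u^2 - h^2*p^2)" using hpu4 unfolding T_def by simp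
    also have "\<dots> = h^2*p*((u^2-1)*g*p)" by (simp add: algebra_simps power2_eq_square)
    finally show ?thesis using hp by simp
  qed
  have hu2: "h^2*u^2 = 4/p^2" using hpu4 hp by (simp add: field_simps)
  have "(4-h^2*u^2)*(4-h^2*p^2) - 16*h^2*p*u*g = (4 - h^2*u^2)*T - 16*h*(h*p*u)*g"
    unfolding T_def by (simp add: algebra_simps power2_eq_square)
  also have "\<dots> = (4-4/p^2)*T - 32*h*g" using hu hu2 by simp
  finally have R0: "(4-h^2*u^2)*(4-h^2*p^2) - 16*h^2*p*u*g = (4-4/p^2)*T - 32*h*g" .
  have "((4-4/p^2)*T - 32*h*g)*T = (4-4/p^2)*T^2 - 32*h*(g*T)" by (simp add: algebra_simps power2_eq_square)
  also have "\<dots> = (4-4/p^2)*T^2 - 64*h^2*(1-p^2)" using gT by (simp add: power2_eq_square)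
  also have "\<dots> = (p^2-1)*(4*T^2/p^2 + 64*h^2)" using hp by (simp add: field_simps power2_eq_square)
  finally have E2: "((4-4/p^2)*T - 32*h*g)*T = (p^2-1)*(4*T^2/p^2 + 64*h^2)" .
  have eqT: "((4-4/p^2)*T - 32*h*g)*T^2 = ((p^2-1)*T)*(4*T^2/p^2 + 64*h^2)"
  proof -
    have "((4-4/p^2)*T - 32*h*g)*T^2 = (((4-4/p^2)*T - 32*h*g)*T)*T" by (simp only: power2_eq_square mult.assoc)
    also have "\<dots> = ((p^2-1)*(4*T^2/p^2 + 64*h^2))*T" by (simp only: E2)
    also have "\<dots> = ((p^2-1)*T)*(4*T^2/p^2 + 64*h^2)" by (simp only: mult_ac)
    finally show ?thesis .
  qed
  have Qpos: "4*T^2/p^2 + 64*h^2 > 0" using hp by (simp add: add_nonneg_pos)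
  have "((4-4/p^2)*T - 32*h*g)*T^2 > 0" using eqT sgn Qpos by simp
  hence "(4-4/p^2)*T - 32*h*g > 0" using T0 by (simp add: zero_less_mult_iff)
  hence R: "(4-h^2*u^2)*(4-h^2*p^2) - 16*h^2*p*u*g > 0" using R0 by simp
  show ?thesis using I R E by simp
qed

lemma unit_iff:
  fixes q :: complex assumes "q \<noteq> 0"
  shows "q / of_real (cmod q) = 1 \<longleftrightarrow> Im q = 0 \<and> Re q > 0"
proof
  assume "q / of_real (cmod q) = 1"
  hence qq: "q = of_real (cmod q)" using assms by (simp add: divide_eq_eq)
  hence "Im q = 0" by (metis Im_complex_of_real)
  moreover have "Re q = cmod q" using qq by (metis Re_complex_of_real)
  ultimately show "Im q = 0 \<and> Re q > 0" using assms by simp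
next
  assume "Im q = 0 \<and> Re q > 0"
  hence "q = of_real (Re q)" "cmod q = Re q" by (simp_all add: complex_eq_iff cmod_def)
  thus "q / of_real (cmod q) = 1" using assms by simp
qed

lemma cos_neg_iff:
  fixes th :: real assumes "0 < th" "th < pi"
  shows "cos th < 0 \<longleftrightarrow> pi/2 < th"
proof
  assume "cos th < 0"
  show "pi/2 < th"
  proof (rule ccontr)
    assume "\<not> pi/2 < th"
    hence "cos th \<ge> 0" using assms by (intro cos_ge_zero) auto
    thus False using \<open>cos th < 0\<close> by simp
  qed
next
  assume "pi/2 < th"
  hence "cos (pi - th) > 0" using assms by (intro cos_gt_zero_pi) auto
  thus "cos th < 0" by simp
qed

theorem mainTheorem8:
  fixes h \<rho> \<delta>\<^sub>1 \<theta>\<^sub>1 :: real and lam1 :: complex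
  assumes "h > 0" and "\<rho> > 0" and "\<delta>\<^sub>1 > 0"
    and "0 < \<theta>\<^sub>1" and "\<theta>\<^sub>1 < pi"
    and "lam1 = of_real \<delta>\<^sub>1 * exp (\<i> * of_real (\<theta>\<^sub>1 / 2))"
    and "mu_plus h \<rho> lam1 \<noteq> 0" and "mu_minus h lam1 \<noteq> 0"
  shows "(\<forall>n::int. \<forall>t::real. expiXi h \<rho> lam1 n t = 1) \<longleftrightarrow>
    ((((\<rho> < 1 \<and> h > 2 / \<rho>^4) \<or> (\<rho> > 1 \<and> h < 2 / \<rho>^4)) \<and>
       \<delta>\<^sub>1 = (1 / \<rho>) * sqrt (2 / h) \<and>
       cos \<theta>\<^sub>1 = 2 * h * (1 - \<rho>^4) / (4 - h^2 * \<rho>^4))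
     \<or> (\<rho> = 1 \<and> h = 2 \<and> \<delta>\<^sub>1 = 1 \<and> pi / 2 < \<theta>\<^sub>1 \<and> \<theta>\<^sub>1 < pi))"
proof -
  note hpos = assms(1) and rpos = assms(2) and dpos = assms(3)
  define p where "p = \<rho>^2"
  define u where "u = \<delta>\<^sub>1^2"
  define g where "g = cos \<theta>\<^sub>1"
  define s where "s = sin \<theta>\<^sub>1"
  have ppos: "p > 0" and upos: "u > 0" using rpos dpos by (simp_all add: p_def u_def)
  have spos: "s > 0" unfolding s_def using assms(4,5) by (rule sin_gt_zero)
  have gs: "g^2 + s^2 = 1" unfolding g_def s_def by simp
  have "g^2 < 1" using gs spos by (smt (verit) zero_less_power)
  hence gb: "-1 < g" "g < 1" by (simp_all add: power2_less_1_iff abs_less_iff)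
  have lam0: "lam1 \<noteq> 0" using assms(6) dpos by simp
  have e2: "exp (\<i> * of_real (\<theta>\<^sub>1 / 2))^2 = cis \<theta>\<^sub>1"
  proof -
    have "exp (\<i> * of_real (\<theta>\<^sub>1 / 2))^2 = exp (2 * (\<i> * of_real (\<theta>\<^sub>1 / 2)))" by (rule exp_double[symmetric])
    also have "2 * (\<i> * of_real (\<theta>\<^sub>1 / 2)) = \<i> * of_real \<theta>\<^sub>1" by simp
    finally show ?thesis by (simp add: cis_conv_exp)
  qed
  have w: "lam1^2 = Complex (u*g) (u*s)"
    unfolding assms(6) power_mult_distrib e2 by (simp add: complex_eq_iff u_def g_def s_def)
  have winv: "1/lam1^2 = Complex (g/u) (-s/u)"
  proof -
    have "(u*g)^2 + (u*s)^2 = u^2*(g^2+s^2)" by (simp add: power_mult_distrib algebra_simps)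
    hence uu: "(u*g)^2 + (u*s)^2 = u^2" using gs by simp
    have "1/lam1^2 = Complex (u*g/u^2) (-(u*s)/u^2)" unfolding w
      by (simp only: divide_inverse mult_1 complex_inverse uu)
    thus ?thesis using upos by (simp add: power2_eq_square)
  qed
  define X where "X = ((1/p - p) - (u - 1/u)*g)/2"
  have Xeq: "Im (\<i> / 2 * of_real (1 / \<rho>^2 - \<rho>^2) - \<i> / 2 * (lam1^2 - 1 / lam1^2)) = X"
    unfolding winv unfolding X_def w p_def by (simp add: field_simps)
  define q where "q = mu_plus h \<rho> lam1 / mu_minus h lam1"
  have q0: "q \<noteq> 0" using assms(7,8) by (simp add: q_def)
  have step1: "(\<forall>n::int. \<forall>t::real. expiXi h \<rho> lam1 n t = 1) \<longleftrightarrow> (q / of_real (cmod q) = 1 \<and> X = 0)"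
  proof
    assume H: "\<forall>n::int. \<forall>t::real. expiXi h \<rho> lam1 n t = 1"
    have "expiXi h \<rho> lam1 1 0 = 1" using H by blast
    hence A: "q / of_real (cmod q) = 1" unfolding expiXi_def Let_def q_def by simp
    have "X = 0"
    proof (rule ccontr)
      assume "X \<noteq> 0"
      have "expiXi h \<rho> lam1 0 (pi/X) = 1" using H by blast
      hence "exp (\<i> * of_real (pi / X * X)) = 1" unfolding expiXi_def Let_def Xeq by simp
      hence "exp (\<i> * of_real pi) = 1" using \<open>X \<noteq> 0\<close> by simp
      thus False by (simp add: exp_pi_i')
    qed
    thus "q / of_real (cmod q) = 1 \<and> X = 0" using A by simp
  next
    assume "q / of_real (cmod q) = 1 \<and> X = 0"
    thus "\<forall>n::int. \<forall>t::real. expiXi h \<rho> lam1 n t = 1"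
      unfolding expiXi_def Let_def Xeq q_def[symmetric] by simp
  qed
  define a where "a = h*p/2"
  define k where "k = 2/h"
  define ik where "ik = Complex 0 k"
  define w where "w = lam1^2"
  have wC: "w = Complex (u*g) (u*s)" unfolding w_def by (rule w)
  define E where "E = ik + w"
  define c where "c = (1 + \<i> * of_real a) / (1 - \<i> * of_real a)"
  have ca: "1 - \<i> * of_real a \<noteq> 0" by (simp add: complex_eq_iff)
  have ik2: "2 * \<i> / (of_real h * lam1) = ik / lam1" using hpos lam0
    by (simp add: ik_def k_def complex_eq_iff Complex_eq field_simps)
  have aa: "\<i> * of_real h * of_real (\<rho>^2) / 2 = \<i> * of_real a" by (simp add: a_def p_def)
  have mp: "mu_plus h \<rho> lam1 = (ik - w) / lam1 * c"
    unfolding mu_plus_def ik2 aa c_def w_def using lam0 by (simp add: field_simps power2_eq_square)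
  have mm: "mu_minus h lam1 = E / lam1"
    unfolding mu_minus_def ik2 E_def w_def using lam0 by (simp add: field_simps power2_eq_square)
  have E0: "E \<noteq> 0" using assms(8) mm by auto
  have qE: "q * E * (1 - \<i> * of_real a) = (ik - w) * (1 + \<i> * of_real a)"
    unfolding q_def mp mm c_def using lam0 E0 ca by (simp add: field_simps)
  define N where "N = (ik - w) * (1 + \<i> * of_real a) * (1 + \<i> * of_real a) * cnj E"
  define r where "r = ((Re E)^2 + (Im E)^2) * (1 + a^2)"
  have rpos: "r > 0" using E0 unfolding r_def
    by (intro mult_pos_pos) (auto simp: complex_eq_iff sum_power2_gt_zero_iff add_pos_nonneg)
  have qr: "q * of_real r = N"
  proof -
    have "q * of_real r = q * (E * cnj E) * ((1 - \<i> * of_real a) * (1 + \<i> * of_real a))"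
      unfolding r_def complex_mult_cnj by (simp add: complex_eq_iff power2_eq_square)
    also have "\<dots> = (q * E * (1 - \<i> * of_real a)) * (1 + \<i> * of_real a) * cnj E" by (simp only: mult_ac)
    also have "\<dots> = N" unfolding qE N_def by (simp only: mult_ac)
    finally show ?thesis .
  qed
  have ReN: "Re N = Re q * r" and ImN: "Im N = Im q * r" using qr[symmetric] by simp_all
  have ImN2: "Im N = 2*(a*(k^2 - u^2*(g^2+s^2)) + k*(u*g)*(1-a^2))"
    unfolding N_def E_def wC ik_def by (simp add: algebra_simps power2_eq_square)
  have ReN2: "Re N = (k^2 - u^2*(g^2+s^2))*(1-a^2) - 4*a*k*(u*g)"
    unfolding N_def E_def wC ik_def by (simp add: algebra_simps power2_eq_square)
  have gs': "g^2+s^2 = 1" by (rule gs)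
  have I1: "h * Im N = 4*p - h^2*p*u^2 + u*g*(4-h^2*p^2)"
    unfolding ImN2 gs' a_def k_def using hpos by (simp add: field_simps power2_eq_square)
  have R1: "4*h^2 * Re N = (4-h^2*u^2)*(4-h^2*p^2) - 16*h^2*p*u*g"
    unfolding ReN2 gs' a_def k_def using hpos by (simp add: field_simps power2_eq_square)
  have XE: "2*p*u*X = (u - p^2*u) - (u^2-1)*g*p"
    unfolding X_def using ppos upos by (simp add: field_simps power2_eq_square)
  have eqv1: "(q / of_real (cmod q) = 1 \<and> X = 0) \<longleftrightarrow>
     (4*p - h^2*p*u^2 + u*g*(4-h^2*p^2) = 0 \<and> (4-h^2*u^2)*(4-h^2*p^2) - 16*h^2*p*u*g > 0
      \<and> u - p^2*u = (u^2-1)*g*p)"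
  proof -
    have a1: "Im q = 0 \<longleftrightarrow> 4*p - h^2*p*u^2 + u*g*(4-h^2*p^2) = 0"
      unfolding I1[symmetric] ImN using hpos rpos by simp
    have a2: "Re q > 0 \<longleftrightarrow> (4-h^2*u^2)*(4-h^2*p^2) - 16*h^2*p*u*g > 0"
      unfolding R1[symmetric] ReN using hpos rpos by (simp add: zero_less_mult_iff)
    have a3: "X = 0 \<longleftrightarrow> u - p^2*u = (u^2-1)*g*p"
    proof -
      have "X = 0 \<longleftrightarrow> 2*p*u*X = 0" using ppos upos by simp
      thus ?thesis unfolding XE by simp
    qed
    show ?thesis unfolding unit_iff[OF q0] a1 a2 a3 by blast
  qed
  have core: "(4*p - h^2*p*u^2 + u*g*(4-h^2*p^2) = 0 \<and> (4-h^2*u^2)*(4-h^2*p^2) - 16*h^2*p*u*g > 0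
      \<and> u - p^2*u = (u^2-1)*g*p) \<longleftrightarrow>
     (((p<1 \<and> h > 2/p^2 \<or> p>1 \<and> h < 2/p^2) \<and> u = 2/(h*p) \<and> g = 2*h*(1-p^2)/(4-h^2*p^2))
         \<or> (p=1 \<and> h=2 \<and> u=1 \<and> g<0))"
    using core_fwd[OF hpos ppos upos gb] core_bwd[OF hpos ppos upos] by blast
  have r4: "\<rho>^4 = p^2" unfolding p_def by simp
  have rl: "\<rho> < 1 \<longleftrightarrow> p < 1" unfolding p_def using assms(2) by (simp add: abs_square_less_1)
  have rg: "\<rho> > 1 \<longleftrightarrow> p > 1" unfolding p_def using assms(2)
    by (metis abs_of_pos abs_square_le_1 not_less)
  have r1: "\<rho> = 1 \<longleftrightarrow> p = 1" unfolding p_def using assms(2) by (metis abs_of_pos abs_square_eq_1)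
  have d1: "\<delta>\<^sub>1 = 1 \<longleftrightarrow> u = 1" unfolding u_def using dpos by (metis abs_of_pos abs_square_eq_1)
  have dd: "\<delta>\<^sub>1 = (1 / \<rho>) * sqrt (2 / h) \<longleftrightarrow> u = 2/(h*p)"
  proof
    assume "\<delta>\<^sub>1 = (1 / \<rho>) * sqrt (2 / h)"
    hence "u = (1/\<rho>)^2 * (sqrt (2/h))^2" unfolding u_def by (simp only: power_mult_distrib)
    thus "u = 2/(h*p)" using hpos unfolding p_def by (simp add: power_divide)
  next
    assume "u = 2/(h*p)"
    hence "\<delta>\<^sub>1 = sqrt (2/(h*\<rho>^2))" unfolding u_def p_def using dpos
      by (metis abs_of_pos real_sqrt_abs)
    also have "\<dots> = sqrt (2/h) / sqrt (\<rho>^2)" by (simp add: real_sqrt_divide real_sqrt_mult field_simps)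
    also have "\<dots> = (1 / \<rho>) * sqrt (2 / h)" using assms(2) by simp
    finally show "\<delta>\<^sub>1 = (1 / \<rho>) * sqrt (2 / h)" .
  qed
  have tt: "(pi / 2 < \<theta>\<^sub>1 \<and> \<theta>\<^sub>1 < pi) \<longleftrightarrow> g < 0"
    unfolding g_def using cos_neg_iff[OF assms(4,5)] assms(5) by blast
  show ?thesis unfolding step1 eqv1 core r4 rl rg r1 d1 dd g_def[symmetric] tt
    by blast
qed

end
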